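(* Let $G=(V,E)$ be a graph of neighborhood diversity $k$ with neighborhood diversity classes $N_1,\ldots,N_k$, and let $r$ be a non-negative integer. Then the number of pairwise $r$-nonequivalent shapes of subsets of $V$ in $G$ (i.e., the number of classes of the $r$-equivalence relation on the set of shapes of subsets $X \subseteq V$) is at most $(2r+3)^k$.
   Context: The neighborhood diversity of $G$ is the minimum size of a partition of $V$ into classes such that any two vertices $v,v'$ in the same class satisfy $N(v)\setminus\{v'\} = N(v')\setminus\{v\}$; $N_1,\ldots,N_k$ is such a partition of minimum size $k$. The shape of $X \subseteq V$ is the $k$-tuple $s=(s_1,\ldots,s_k)$ with $s_i = |X\cap N_i|$; its complementary shape is $\overline{s} = (|N_1|-s_1,\ldots,|N_k|-s_k)$, the shape of $V\setminus X$. Two shapes $s,t$ are $r$-equivalent if for every $i$ either $s_i = t_i$ or both $s_i,t_i > r$, and the same condition holds for the complementary shapes $\overline{s},\overline{t}$. *)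

theory Defs
  imports Main
begin

definition simple_graph :: "'a set \<Rightarrow> ('a \<Rightarrow> 'a \<Rightarrow> bool) \<Rightarrow> bool" where
  "simple_graph V E \<longleftrightarrow> finite V \<and> (\<forall>u v. E u v \<longrightarrow> u \<in> V \<and> v \<in> V)
     \<and> (\<forall>u v. E u v \<longrightarrow> E v u) \<and> (\<forall>v. \<not> E v v)"

definition nbh :: "'a set \<Rightarrow> ('a \<Rightarrow> 'a \<Rightarrow> bool) \<Rightarrow> 'a \<Rightarrow> 'a set" where
  "nbh V E v = {u \<in> V. E v u}"

definition nd_partition :: "'a set \<Rightarrow> ('a \<Rightarrow> 'a \<Rightarrow> bool) \<Rightarrow> 'a set set \<Rightarrow> bool" where
  "nd_partition V E P \<longleftrightarrow>
     \<Union>P = V \<and> {} \<notin> P \<and> (\<forall>A\<in>P. \<forall>B\<in>P. A \<noteq> B \<longrightarrow> A \<inter> B = {})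
     \<and> (\<forall>A\<in>P. \<forall>v\<in>A. \<forall>v'\<in>A. nbh V E v - {v'} = nbh V E v' - {v})"

definition neighborhood_diversity :: "'a set \<Rightarrow> ('a \<Rightarrow> 'a \<Rightarrow> bool) \<Rightarrow> nat" where
  "neighborhood_diversity V E = (LEAST k. \<exists>P. nd_partition V E P \<and> finite P \<and> card P = k)"

definition shape :: "(nat \<Rightarrow> 'a set) \<Rightarrow> nat \<Rightarrow> 'a set \<Rightarrow> nat list" where
  "shape N k X = map (\<lambda>i. card (X \<inter> N i)) [0..<k]"

definition comp_shape :: "(nat \<Rightarrow> 'a set) \<Rightarrow> nat \<Rightarrow> nat list \<Rightarrow> nat list" where
  "comp_shape N k s = map (\<lambda>i. card (N i) - s ! i) [0..<k]"

definition shapes :: "'a set \<Rightarrow> (nat \<Rightarrow> 'a set) \<Rightarrow> nat \<Rightarrow> nat list set" where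
  "shapes V N k = {shape N k X | X. X \<subseteq> V}"

definition r_equiv :: "(nat \<Rightarrow> 'a set) \<Rightarrow> nat \<Rightarrow> nat \<Rightarrow> nat list \<Rightarrow> nat list \<Rightarrow> bool" where
  "r_equiv N k r s t \<longleftrightarrow>
     (\<forall>i<k. s ! i = t ! i \<or> (s ! i > r \<and> t ! i > r)) \<and>
     (\<forall>i<k. comp_shape N k s ! i = comp_shape N k t ! i \<or>
            (comp_shape N k s ! i > r \<and> comp_shape N k t ! i > r))"

definition r_equiv_rel :: "'a set \<Rightarrow> (nat \<Rightarrow> 'a set) \<Rightarrow> nat \<Rightarrow> nat \<Rightarrow> (nat list \<times> nat list) set" where
  "r_equiv_rel V N k r = {(s, t). s \<in> shapes V N k \<and> t \<in> shapes V N k \<and> r_equiv N k r s t}"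

end

theory Submission
  imports Defs
begin
definition code :: "(nat \<Rightarrow> 'a set) \<Rightarrow> nat \<Rightarrow> nat \<Rightarrow> nat list \<Rightarrow> nat \<Rightarrow> nat" where
  "code N k r s i = (if s ! i \<le> r then s ! i
     else if comp_shape N k s ! i \<le> r then Suc r + comp_shape N k s ! i else 2*r+2)"

definition codes :: "(nat \<Rightarrow> 'a set) \<Rightarrow> nat \<Rightarrow> nat \<Rightarrow> nat list \<Rightarrow> nat list" where
  "codes N k r s = map (code N k r s) [0..<k]"

lemma code_lt: "code N k r s i < 2*r+3"
  unfolding code_def by auto

lemma codes_eq_equiv:
  assumes "codes N k r s = codes N k r t"
  shows "r_equiv N k r s t"
proof -
  have c: "code N k r s i = code N k r t i" if "i < k" for i
  proof -
    have "codes N k r s ! i = codes N k r t ! i" using assms by simp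
    then show ?thesis using that unfolding codes_def by simp
  qed
  have cs: "comp_shape N k s ! i = card (N i) - s ! i" if "i<k" for i s
    using that unfolding comp_shape_def by simp
  show ?thesis unfolding r_equiv_def
  proof (intro conjI allI impI)
    fix i assume i: "i<k"
    show "s ! i = t ! i \<or> (s ! i > r \<and> t ! i > r)"
      using c[OF i] cs[OF i, of s] cs[OF i, of t] unfolding code_def by (auto split: if_splits)
    show "comp_shape N k s ! i = comp_shape N k t ! i \<or>
            (comp_shape N k s ! i > r \<and> comp_shape N k t ! i > r)"
      using c[OF i] cs[OF i, of s] cs[OF i, of t] unfolding code_def by (auto split: if_splits)
  qed
qed

lemma r_equiv_trans: "r_equiv N k r s t \<Longrightarrow> r_equiv N k r t u \<Longrightarrow> r_equiv N k r s u"
proof -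
  assume a: "r_equiv N k r s t" and b: "r_equiv N k r t u"
  show ?thesis unfolding r_equiv_def
  proof (intro conjI allI impI)
    fix i assume i: "i < k"
    have 1: "s ! i = t ! i \<or> (s ! i > r \<and> t ! i > r)" using a i unfolding r_equiv_def by blast
    have 2: "t ! i = u ! i \<or> (t ! i > r \<and> u ! i > r)" using b i unfolding r_equiv_def by blast
    from 1 2 show "s ! i = u ! i \<or> (s ! i > r \<and> u ! i > r)" by auto
    have 3: "comp_shape N k s ! i = comp_shape N k t ! i \<or> (comp_shape N k s ! i > r \<and> comp_shape N k t ! i > r)" using a i unfolding r_equiv_def by blast
    have 4: "comp_shape N k t ! i = comp_shape N k u ! i \<or> (comp_shape N k t ! i > r \<and> comp_shape N k u ! i > r)" using b i unfolding r_equiv_def by blast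
    from 3 4 show "comp_shape N k s ! i = comp_shape N k u ! i \<or> (comp_shape N k s ! i > r \<and> comp_shape N k u ! i > r)" by auto
  qed
qed

lemma r_equiv_sym: "r_equiv N k r s t \<Longrightarrow> r_equiv N k r t s"
  unfolding r_equiv_def by auto

lemma card_factor:
  assumes "finite (f ` A)" and "\<And>x y. x \<in> A \<Longrightarrow> y \<in> A \<Longrightarrow> f x = f y \<Longrightarrow> g x = g y"
  shows "card (g ` A) \<le> card (f ` A)"
proof -
  define h where "h = (\<lambda>c. g (SOME x. x \<in> A \<and> f x = c))"
  have hx: "h (f x) = g x" if x: "x \<in> A" for x
  proof -
    have ex: "\<exists>y. y \<in> A \<and> f y = f x" using x by blast
    define y where "y = (SOME y. y \<in> A \<and> f y = f x)"
    have y: "y \<in> A \<and> f y = f x" unfolding y_def by (rule someI_ex[OF ex])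
    have "h (f x) = g y" unfolding h_def y_def by simp
    also have "\<dots> = g x" using assms(2)[of y x] y x by simp
    finally show ?thesis .
  qed
  have "g ` A \<subseteq> h ` (f ` A)"
  proof
    fix z assume "z \<in> g ` A"
    then obtain x where x: "x \<in> A" "z = g x" by blast
    then have "z = h (f x)" using hx by simp
    then show "z \<in> h ` (f ` A)" using x(1) by blast
  qed
  then show ?thesis by (rule surj_card_le[OF assms(1)])
qed

theorem proposition2:
  fixes V :: "'a set" and E :: "'a \<Rightarrow> 'a \<Rightarrow> bool" and N :: "nat \<Rightarrow> 'a set" and k r :: nat
  assumes "simple_graph V E"
    and "neighborhood_diversity V E = k"
    and "nd_partition V E (N ` {..<k})"
    and "inj_on N {..<k}"
  shows "card (shapes V N k // r_equiv_rel V N k r) \<le> (2 * r + 3) ^ k"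
proof -
  let ?S = "shapes V N k" and ?R = "r_equiv_rel V N k r"
  let ?L = "{xs. set xs \<subseteq> {..<2*r+3} \<and> length xs = k}"
  have sub: "codes N k r ` ?S \<subseteq> ?L"
    unfolding codes_def using code_lt by auto
  have finL: "finite ?L" by (rule finite_lists_length_eq) simp
  have cardL: "card ?L = (2*r+3)^k" by (simp add: card_lists_length_eq)
  have fin: "finite (codes N k r ` ?S)" using sub finL finite_subset by blast
  have q: "?S // ?R = (\<lambda>x. ?R `` {x}) ` ?S"
    unfolding quotient_def by blast
  have "card ((\<lambda>x. ?R `` {x}) ` ?S) \<le> card (codes N k r ` ?S)"
  proof (rule card_factor[OF fin])
    fix x y assume xy: "x \<in> ?S" "y \<in> ?S" "codes N k r x = codes N k r y"
    have e: "r_equiv N k r x y" by (rule codes_eq_equiv[OF xy(3)])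
    have e2: "r_equiv N k r y x" using e by (rule r_equiv_sym)
    show "?R `` {x} = ?R `` {y}"
    proof (intro equalityI subsetI)
      fix z assume "z \<in> ?R `` {x}"
      then show "z \<in> ?R `` {y}" using xy(2) e2 r_equiv_trans[of N k r y x z]
        unfolding r_equiv_rel_def by auto
    next
      fix z assume "z \<in> ?R `` {y}"
      then show "z \<in> ?R `` {x}" using xy(1) e r_equiv_trans[of N k r x y z]
        unfolding r_equiv_rel_def by auto
    qed
  qed
  also have "\<dots> \<le> card ?L" using card_mono[OF finL sub] .
  finally show ?thesis using q cardL by simp
qed

end
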